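(* Fix $n\in\mathbb N$. In the $q$-shuffle algebra $\mathbb V$, each of the following pairs of sets (with $i,j$ ranging over $\mathbb N$ with $i+j=n$) have the same linear span: (1) $\{G_i\star W_{-j}\}$ and $\{W_{-j}\star G_i\}$; (2) $\{G_i\star W_{j+1}\}$ and $\{W_{j+1}\star G_i\}$; (3) $\{\tilde G_i\star W_{-j}\}$ and $\{W_{-j}\star\tilde G_i\}$; (4) $\{\tilde G_i\star W_{j+1}\}$ and $\{W_{j+1}\star \tilde G_i\}$.
   Context: Let $\mathbb F$ be a field and let $q\in\mathbb F$ be nonzero and not a root of unity. Let $\mathbb V$ be the free associative $\mathbb F$-algebra on noncommuting $x,y$, with basis the words (including $1$). Juxtaposition denotes concatenation. Set $\langle x,x\rangle=\langle y,y\rangle=2$ and $\langle x,y\rangle=\langle y,x\rangle=-2$. The $q$-shuffle product $\star$ is the bilinear product determined as follows: - $1\star v=v\star 1=v$; - for nontrivial words $u=u_1\cdots u_r$ and $v=v_1\cdots v_s$, $$u\star v=u_1((u_2\cdots u_r)\star v)+v_1(u\star(v_2\cdots v_s))q^{\langle u_1,v_1\rangle+\cdots+\langle u_r,v_1\rangle}.$$ This makes $\mathbb V$ an associative algebra, the $q$-shuffle algebra. For $k\in\mathbb N$: - $W_{-k}=xyx\cdots x$ is the alternating word of length $2k+1$ beginning and ending with $x$; - $W_{k+1}=yxy\cdots y$ is the alternating word of length $2k+1$ beginning and ending with $y$; - $G_k=yxyx\cdots yx$ is the word of length $2k$; - $\tilde G_k=xyxy\cdots xy$ is the word of length $2k$;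 - $G_0=\tilde G_0=1$. *)

theory Defs
  imports Main
begin

datatype letter = X | Y

type_synonym word = "letter list"

text \<open>An element of the free algebra V over a field 'a is represented by its
coefficient function on words (basis vectors); here only finitely supported
ones occur.\<close>

definition pairing :: "letter \<Rightarrow> letter \<Rightarrow> int" where
  "pairing a b = (if a = b then 2 else -2)"

definition basis :: "word \<Rightarrow> (word \<Rightarrow> 'a::field)" where
  "basis u = (\<lambda>w. if w = u then 1 else 0)"

definition lcons :: "letter \<Rightarrow> (word \<Rightarrow> 'a::field) \<Rightarrow> (word \<Rightarrow> 'a)" where
  "lcons a f = (\<lambda>w. case w of [] \<Rightarrow> 0 | c # w' \<Rightarrow> if c = a then f w' else 0)"

fun qshuffle :: "'a::field \<Rightarrow> word \<Rightarrow> word \<Rightarrow> (word \<Rightarrow> 'a)" where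
  "qshuffle q [] v = basis v"
| "qshuffle q (a # u) [] = basis (a # u)"
| "qshuffle q (a # u) (b # v) =
     (\<lambda>w. lcons a (qshuffle q u (b # v)) w
          + lcons b (qshuffle q (a # u) v) w
            * q powi (sum_list (map (\<lambda>c. pairing c b) (a # u))))"

definition lin_span :: "(word \<Rightarrow> 'a::field) set \<Rightarrow> (word \<Rightarrow> 'a) set" where
  "lin_span S = {f. \<exists>(I::nat set) c v. finite I \<and> v ` I \<subseteq> S \<and>
                        f = (\<lambda>w. \<Sum>i\<in>I. c i * v i w)}"

text \<open>W_{-k} = xyx...x (length 2k+1); W_{k+1} = yxy...y (length 2k+1);
G_k = yx...yx (length 2k); Gt_k = xy...xy (length 2k).\<close>
definition Wneg :: "nat \<Rightarrow> word" where
  "Wneg k = concat (replicate k [X, Y]) @ [X]"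

definition Wpos :: "nat \<Rightarrow> word" where
  "Wpos k = concat (replicate k [Y, X]) @ [Y]"

definition Gw :: "nat \<Rightarrow> word" where
  "Gw k = concat (replicate k [Y, X])"

definition Gtw :: "nat \<Rightarrow> word" where
  "Gtw k = concat (replicate k [X, Y])"

end

theory Submission
  imports Defs "HOL-Library.Function_Algebras"
begin

lemma qs_Nil2[simp]: "qshuffle q u [] = basis u"
  by (cases u) auto

definition rcons :: "letter \<Rightarrow> (word \<Rightarrow> 'a::field) \<Rightarrow> (word \<Rightarrow> 'a)" where
  "rcons a f = (\<lambda>w. if w \<noteq> [] \<and> last w = a then f (butlast w) else 0)"

definition smul :: "'a::field \<Rightarrow> (word \<Rightarrow> 'a) \<Rightarrow> (word \<Rightarrow> 'a)" where
  "smul c f = (\<lambda>w. c * f w)"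

lemma pairing_sym: "pairing a b = pairing b a"
  by (simp add: pairing_def)

lemma qs_cons: "qshuffle q (a#u) (b#v) = lcons a (qshuffle q u (b#v))
   + smul (q powi (sum_list (map (\<lambda>c. pairing c b) (a#u)))) (lcons b (qshuffle q (a#u) v))"
  by (simp only: qshuffle.simps) (simp add: fun_eq_iff smul_def mult.commute)

declare qshuffle.simps(3)[simp del]

lemma lcons_add[simp]: "lcons a (f + g) = lcons a f + lcons a g"
  by (auto simp: fun_eq_iff lcons_def split: list.split)
lemma lcons_smul[simp]: "lcons a (smul c f) = smul c (lcons a f)"
  by (auto simp: fun_eq_iff lcons_def smul_def split: list.split)
lemma rcons_add[simp]: "rcons a (f + g) = rcons a f + rcons a g"
  by (auto simp: fun_eq_iff rcons_def)
lemma rcons_smul[simp]: "rcons a (smul c f) = smul c (rcons a f)"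
  by (auto simp: fun_eq_iff rcons_def smul_def)
lemma smul_add[simp]: "smul c (f + g) = smul c f + smul c g"
  by (auto simp: fun_eq_iff smul_def algebra_simps)
lemma smul_smul[simp]: "smul c (smul d f) = smul (c * d) f"
  by (auto simp: fun_eq_iff smul_def)
lemma smul_one[simp]: "smul 1 f = f"
  by (auto simp: fun_eq_iff smul_def)
lemma rcons_lcons[simp]: "rcons b (lcons a f) = lcons a (rcons b f)"
  by (auto simp: fun_eq_iff lcons_def rcons_def split: list.split)
lemma lcons_basis[simp]: "lcons a (basis u) = basis (a # u)"
  by (auto simp: fun_eq_iff lcons_def basis_def split: list.split)
lemma rcons_basis[simp]: "rcons a (basis u) = basis (u @ [a])"
  by (auto simp: fun_eq_iff rcons_def basis_def)

lemmas vsimps = rcons_add rcons_smul lcons_add lcons_smul smul_add smul_smul rcons_lcons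
  lcons_basis rcons_basis qshuffle.simps(1) qs_Nil2
lemmas lsimps = list.map sum_list.Cons sum_list.Nil map_append sum_list_append add_0_right
  append_assoc append.simps

lemma qs_snoc:
  fixes q :: "'a::field"
  assumes q: "q \<noteq> 0"
  shows "qshuffle q (u @ [a]) (v @ [b]) =
     smul (q powi (sum_list (map (pairing a) (v @ [b])))) (rcons a (qshuffle q u (v @ [b])))
     + rcons b (qshuffle q (u @ [a]) v)"
proof -
  have pw: "\<And>m n. q powi m * q powi n = q powi (m+n)" using q by (simp add: power_int_add)
  show ?thesis
  proof (induction u arbitrary: v)
    case Nil
    show ?case
    proof (induction v)
      case Nil
      then show ?case by (simp add: qs_cons add.commute pairing_sym)
    next
      case (Cons d v')
      show ?case
        apply (simp only: append.simps qs_cons Cons.IH[simplified append.simps] vsimps)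
        apply (simp only: pw lsimps)
        apply (simp only: add_ac pairing_sym)
        done
    qed
  next
    case (Cons c u')
    note IH1 = Cons.IH
    show ?case
    proof (induction v)
      case Nil
      show ?case
        apply (simp only: append.simps qs_cons Cons.IH[of "[]", simplified append.simps] vsimps)
        apply (simp only: pw lsimps)
        apply (simp only: add_ac pairing_sym)
        done
    next
      case (Cons d v')
      note IH2 = Cons.IH
      show ?case
        apply (simp only: append.simps qs_cons IH1[of "d # v'", simplified append.simps] IH2[simplified append.simps] vsimps)
        apply (simp only: pw lsimps)
        apply (simp only: add_ac pairing_sym)
        done
    qed
  qed
qed

lemma rcons_rev: "rcons a f (rev w) = lcons a (\<lambda>x. f (rev x)) w"
  by (cases w) (auto simp: rcons_def lcons_def butlast_rev)

lemma qs_rev: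
  fixes q :: "'a::field"
  assumes q: "q \<noteq> 0"
  shows "qshuffle q u v (rev w) = qshuffle q (rev v) (rev u) w"
proof (induction u arbitrary: v w rule: rev_induct)
  case Nil
  then show ?case by (auto simp: basis_def)
next
  case (snoc a u')
  note IH1 = snoc.IH
  show ?case
  proof (induction v arbitrary: w rule: rev_induct)
    case Nil
    then show ?case by (auto simp: basis_def rev_swap)
  next
    case (snoc b v')
    note IH2 = snoc.IH
    have e1: "(\<lambda>x. qshuffle q u' (v' @ [b]) (rev x)) = qshuffle q (b # rev v') (rev u')"
      using IH1 by auto
    have e2: "(\<lambda>x. qshuffle q (u' @ [a]) v' (rev x)) = qshuffle q (rev v') (a # rev u')"
      using IH2 by auto
    have ex: "sum_list (map (pairing a) (v' @ [b])) = sum_list (map (\<lambda>c. pairing c a) (b # rev v'))"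
    proof -
      have m: "map (pairing a) v' = map (\<lambda>c. pairing c a) v'" by (simp add: pairing_sym)
      show ?thesis by (simp only: m rev_map[symmetric] sum_list_rev map_append list.map sum_list_append sum_list.Cons sum_list.Nil pairing_sym[of a b] add.commute)
    qed
    show ?case
      apply (simp only: qs_snoc[OF q] rev_append rev.simps append.simps qs_cons ex)
      apply (simp add: smul_def rcons_rev e1 e2 add.commute mult.commute)
      done
  qed
qed

lemma smul_zero[simp]: "smul c 0 = 0"
  by (simp add: fun_eq_iff smul_def)
lemma smul_diff: "smul c (f - g) = smul c f - smul c g"
  by (simp add: fun_eq_iff smul_def algebra_simps)

definition spn :: "(word \<Rightarrow> 'a::field) set \<Rightarrow> (word \<Rightarrow> 'a) set" where
  "spn S = \<Inter>{T. 0 \<in> T \<and> (\<forall>s\<in>S. \<forall>f\<in>T. \<forall>c. smul c s + f \<in> T)}"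

lemma spn_0: "0 \<in> spn S" by (simp add: spn_def)
lemma spn_stepI: "s \<in> S \<Longrightarrow> f \<in> spn S \<Longrightarrow> smul c s + f \<in> spn S"
  unfolding spn_def by blast
lemma spn_induct[consumes 1, case_names spn_zero spn_step]:
  assumes "f \<in> spn S" "P 0" "\<And>s f c. s \<in> S \<Longrightarrow> f \<in> spn S \<Longrightarrow> P f \<Longrightarrow> P (smul c s + f)"
  shows "P f"
proof -
  let ?T = "{f. f \<in> spn S \<and> P f}"
  have "0 \<in> ?T" using assms(2) spn_0 by blast
  moreover have "\<forall>s\<in>S. \<forall>f\<in>?T. \<forall>c. smul c s + f \<in> ?T"
  proof (intro ballI allI)
    fix s f c assume "s \<in> S" "f \<in> ?T"
    then show "smul c s + f \<in> ?T" using assms(3)[of s f c] spn_stepI[of s S f c] by blast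
  qed
  ultimately have "?T \<in> {T. 0 \<in> T \<and> (\<forall>s\<in>S. \<forall>f\<in>T. \<forall>c. smul c s + f \<in> T)}" by blast
  then have "spn S \<subseteq> ?T" unfolding spn_def by (rule Inter_lower)
  then show ?thesis using assms(1) by blast
qed

lemma spn_base: "s \<in> S \<Longrightarrow> s \<in> spn S"
  using spn_stepI[of s S 0 1] spn_0[of S] by simp

lemma spn_add: "f \<in> spn S \<Longrightarrow> g \<in> spn S \<Longrightarrow> f + g \<in> spn S"
proof (induction f rule: spn_induct)
  case spn_zero
  then show ?case by (simp only: add_0_left)
next
  case (spn_step s f c)
  have "f + g \<in> spn S" using spn_step(3,4) .
  then have "smul c s + (f + g) \<in> spn S" using spn_step(1) by (rule spn_stepI[rotated])
  then show ?case by (simp only: add.assoc)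
qed

lemma spn_smul: "f \<in> spn S \<Longrightarrow> smul c f \<in> spn S"
proof (induction f rule: spn_induct)
  case spn_zero
  show ?case by (simp only: smul_zero spn_0)
next
  case (spn_step s f d)
  have "smul (c * d) s + smul c f \<in> spn S" using spn_step(3) spn_step(1) by (rule spn_stepI[rotated])
  then show ?case by (simp only: smul_add smul_smul)
qed

lemma spn_neg: "f \<in> spn S \<Longrightarrow> - f \<in> spn S"
proof -
  assume "f \<in> spn S"
  then have "smul (-1) f \<in> spn S" by (rule spn_smul)
  moreover have "smul (-1) f = - f" by (simp add: fun_eq_iff smul_def)
  ultimately show ?thesis by simp
qed

lemma spn_diff: "f \<in> spn S \<Longrightarrow> g \<in> spn S \<Longrightarrow> f - g \<in> spn S"
  using spn_add[of f S "- g"] spn_neg[of g S] by (simp only: diff_conv_add_uminus)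

lemma spn_mono: "S \<subseteq> spn T \<Longrightarrow> spn S \<subseteq> spn T"
proof
  fix f assume A: "S \<subseteq> spn T" and "f \<in> spn S"
  from \<open>f \<in> spn S\<close> show "f \<in> spn T"
  proof (induction f rule: spn_induct)
    case spn_zero
    then show ?case by (rule spn_0)
  next
    case (spn_step s f c)
    have "s \<in> spn T" using A spn_step(1) by blast
    then have "smul c s \<in> spn T" by (rule spn_smul)
    then show ?case using spn_step(3) by (rule spn_add)
  qed
qed

lemma spn_eqI: "S \<subseteq> spn T \<Longrightarrow> T \<subseteq> spn S \<Longrightarrow> spn S = spn T"
  using spn_mono by blast

lemma lin_span_spn: "lin_span S = spn S"
proof
  show "lin_span S \<subseteq> spn S"
  proof
    fix f assume "f \<in> lin_span S"
    then have "\<exists>(I::nat set) c v. finite I \<and> v ` I \<subseteq> S \<and> f = (\<lambda>w. \<Sum>i\<in>I. c i * v i w)"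
      unfolding lin_span_def by (rule CollectD)
    then obtain I :: "nat set" and c :: "nat \<Rightarrow> 'a" and v :: "nat \<Rightarrow> word \<Rightarrow> 'a" where H: "finite I \<and> v ` I \<subseteq> S \<and> f = (\<lambda>w. \<Sum>i\<in>I. c i * v i w)"
      by blast
    then have I: "finite I" "v ` I \<subseteq> S" and f: "f = (\<lambda>w. \<Sum>i\<in>I. c i * v i w)" by simp_all
    have "(\<lambda>w. \<Sum>i\<in>I. c i * v i w) \<in> spn S" using I
    proof (induction I rule: finite_induct)
      case empty
      have "(\<lambda>w. \<Sum>i\<in>{}. c i * v i w) = 0" by (simp add: fun_eq_iff)
      then show ?case using spn_0 by metis
    next
      case (insert i I)
      have "v i \<in> S" using insert.prems by blast
      moreover have "(\<lambda>w. \<Sum>i\<in>I. c i * v i w) \<in> spn S" using insert.IH insert.prems by blast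
      ultimately have "smul (c i) (v i) + (\<lambda>w. \<Sum>i\<in>I. c i * v i w) \<in> spn S"
        by (rule spn_stepI)
      moreover have "smul (c i) (v i) + (\<lambda>w. \<Sum>i\<in>I. c i * v i w) = (\<lambda>w. \<Sum>i\<in>insert i I. c i * v i w)"
        using insert.hyps by (simp add: fun_eq_iff smul_def)
      ultimately show ?case by metis
    qed
    then show "f \<in> spn S" using f by simp
  qed
next
  show "spn S \<subseteq> lin_span S"
  proof
    fix f assume "f \<in> spn S"
    then show "f \<in> lin_span S"
    proof (induction f rule: spn_induct)
      case spn_zero
      have "(0::word \<Rightarrow> 'a) = (\<lambda>w. \<Sum>i\<in>{}. (\<lambda>_. 0) i * (\<lambda>_. 0) i w)" by (simp add: fun_eq_iff)
      then show ?case unfolding lin_span_def mem_Collect_eq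
        by (intro exI[of _ "{}::nat set"] exI[of _ "\<lambda>_. 0"] exI[of _ "\<lambda>_. 0"] conjI) auto
    next
      case (spn_step s f d)
      from spn_step(3) have "\<exists>(I::nat set) c v. finite I \<and> v ` I \<subseteq> S \<and> f = (\<lambda>w. \<Sum>i\<in>I. c i * v i w)"
        unfolding lin_span_def by (rule CollectD)
      then obtain I :: "nat set" and c :: "nat \<Rightarrow> 'a" and v :: "nat \<Rightarrow> word \<Rightarrow> 'a" where H: "finite I \<and> v ` I \<subseteq> S \<and> f = (\<lambda>w. \<Sum>i\<in>I. c i * v i w)"
        by blast
      then have I: "finite I" "v ` I \<subseteq> S" and f: "f = (\<lambda>w. \<Sum>i\<in>I. c i * v i w)" by simp_all
      obtain m :: nat where m: "m \<notin> I" using I(1) ex_new_if_finite[OF infinite_UNIV_nat] by blast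
      define c' where "c' = c(m := d)"
      define v' where "v' = v(m := s)"
      have "smul d s + f = (\<lambda>w. \<Sum>i\<in>insert m I. c' i * v' i w)"
      proof (rule ext)
        fix w
        have "(\<Sum>i\<in>insert m I. c' i * v' i w) = d * s w + (\<Sum>i\<in>I. c' i * v' i w)"
          using I(1) m by (simp add: c'_def v'_def)
        also have "(\<Sum>i\<in>I. c' i * v' i w) = (\<Sum>i\<in>I. c i * v i w)"
          using m by (intro sum.cong) (auto simp: c'_def v'_def)
        finally show "(smul d s + f) w = (\<Sum>i\<in>insert m I. c' i * v' i w)"
          by (simp add: f smul_def)
      qed
      moreover have "v' ` insert m I \<subseteq> S" using I(2) spn_step(1) m by (auto simp: v'_def)
      moreover have "finite (insert m I)" using I(1) by simp
      ultimately show ?case unfolding lin_span_def mem_Collect_eq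
        by (intro exI[of _ "insert m I"] exI[of _ c'] exI[of _ v'] conjI)
    qed
  qed
qed

lemma spn_comp: "spn ((\<lambda>f. f \<circ> h) ` S) = (\<lambda>f. f \<circ> h) ` spn S"
proof
  show "spn ((\<lambda>f. f \<circ> h) ` S) \<subseteq> (\<lambda>f. f \<circ> h) ` spn S"
  proof
    fix f assume "f \<in> spn ((\<lambda>f. f \<circ> h) ` S)"
    then show "f \<in> (\<lambda>f. f \<circ> h) ` spn S"
    proof (induction f rule: spn_induct)
      case spn_zero
      have "(0::word \<Rightarrow> 'a) = 0 \<circ> h" by (simp add: fun_eq_iff)
      then show ?case using spn_0 by (rule image_eqI)
    next
      case (spn_step s f c)
      obtain s' where s': "s' \<in> S" "s = s' \<circ> h" using spn_step(1) by blast
      obtain f' where f': "f' \<in> spn S" "f = f' \<circ> h" using spn_step(3) by blast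
      have "smul c s + f = (smul c s' + f') \<circ> h" using s' f'
        by (simp add: fun_eq_iff smul_def)
      moreover have "smul c s' + f' \<in> spn S" using s'(1) f'(1) by (rule spn_stepI)
      ultimately show ?case by (rule image_eqI)
    qed
  qed
next
  show "(\<lambda>f. f \<circ> h) ` spn S \<subseteq> spn ((\<lambda>f. f \<circ> h) ` S)"
  proof
    fix g assume "g \<in> (\<lambda>f. f \<circ> h) ` spn S"
    then obtain f where f: "f \<in> spn S" "g = f \<circ> h" by blast
    from f(1) have "f \<circ> h \<in> spn ((\<lambda>f. f \<circ> h) ` S)"
    proof (induction f rule: spn_induct)
      case spn_zero
      have "(0::word \<Rightarrow> 'a) \<circ> h = 0" by (simp add: fun_eq_iff)
      then show ?case using spn_0 by metis
    next
      case (spn_step s f c)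
      have eq: "(smul c s + f) \<circ> h = smul c (s \<circ> h) + (f \<circ> h)"
        by (simp add: fun_eq_iff smul_def)
      have "s \<circ> h \<in> (\<lambda>f. f \<circ> h) ` S" using spn_step(1) by blast
      then have "smul c (s \<circ> h) + (f \<circ> h) \<in> spn ((\<lambda>f. f \<circ> h) ` S)"
        using spn_step(3) by (rule spn_stepI)
      then show ?case by (simp only: eq)
    qed
    then show "g \<in> spn ((\<lambda>f. f \<circ> h) ` S)" using f(2) by simp
  qed
qed


fun oth :: "letter \<Rightarrow> letter" where "oth X = Y" | "oth Y = X"

definition Wg :: "letter \<Rightarrow> nat \<Rightarrow> word" where
  "Wg a k = concat (replicate k [a, oth a]) @ [a]"
definition Gg :: "letter \<Rightarrow> nat \<Rightarrow> word" where
  "Gg a k = concat (replicate k [oth a, a])"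

lemma Wg_cons: "Wg a k = a # Gg a k"
  by (induction k) (auto simp: Wg_def Gg_def)
lemma Gg_Suc: "Gg a (Suc k) = oth a # Wg a k"
  by (simp add: Gg_def Wg_cons)
lemma Gg_0[simp]: "Gg a 0 = []"
  by (simp add: Gg_def)
lemma pair_aa[simp]: "pairing a a = 2" by (simp add: pairing_def)
lemma pair_ab[simp]: "pairing a (oth a) = -2" by (cases a) (simp_all add: pairing_def)
lemma pair_ba[simp]: "pairing (oth a) a = -2" by (cases a) (simp_all add: pairing_def)
lemma sum_Gg[simp]: "sum_list (map (\<lambda>c. pairing c d) (Gg a k)) = 0"
  by (induction k) (cases a; cases d; simp add: Gg_Suc Wg_cons pairing_def)+
lemma sum_Wg[simp]: "sum_list (map (\<lambda>c. pairing c d) (Wg a k)) = pairing a d"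
  by (simp add: Wg_cons)

context
  fixes q :: "'a::field" and a :: letter
begin

abbreviation "GW m k \<equiv> qshuffle q (Gg a m) (Wg a k)"
abbreviation "WG m k \<equiv> qshuffle q (Wg a m) (Gg a k)"
abbreviation "GG m k \<equiv> qshuffle q (Gg a m) (Gg a k)"
abbreviation "WW m k \<equiv> qshuffle q (Wg a m) (Wg a k)"

lemma GW_0: "GW 0 k = lcons a (GG 0 k)"
  by (simp add: Wg_cons)
lemma WG_0: "WG m 0 = lcons a (GG m 0)"
  by (simp add: Wg_cons)
lemma GG_0l: "GG 0 k = basis (Gg a k)" by simp
lemma GG_0r: "GG m 0 = basis (Gg a m)" by simp

lemma GW_Suc: "GW (Suc m) k = lcons (oth a) (WW m k) + lcons a (GG (Suc m) k)"
proof -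
  have "GW (Suc m) k = qshuffle q (oth a # Wg a m) (a # Gg a k)"
    by (simp only: Gg_Suc Wg_cons[of a k])
  also have "\<dots> = lcons (oth a) (qshuffle q (Wg a m) (a # Gg a k))
     + smul (q powi (sum_list (map (\<lambda>c. pairing c a) (oth a # Wg a m)))) (lcons a (qshuffle q (oth a # Wg a m) (Gg a k)))"
    by (rule qs_cons)
  also have "\<dots> = lcons (oth a) (WW m k) + lcons a (GG (Suc m) k)"
    by (simp add: Wg_cons[of a k, symmetric] Gg_Suc[symmetric])
  finally show ?thesis .
qed

lemma WG_Suc: "WG m (Suc k) = lcons a (GG m (Suc k)) + smul (q powi (-2)) (lcons (oth a) (WW m k))"
proof -
  have "WG m (Suc k) = qshuffle q (a # Gg a m) (oth a # Wg a k)"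
    by (simp only: Gg_Suc Wg_cons[of a m])
  also have "\<dots> = lcons a (qshuffle q (Gg a m) (oth a # Wg a k))
     + smul (q powi (sum_list (map (\<lambda>c. pairing c (oth a)) (a # Gg a m)))) (lcons (oth a) (qshuffle q (a # Gg a m) (Wg a k)))"
    by (rule qs_cons)
  also have "\<dots> = lcons a (GG m (Suc k)) + smul (q powi (-2)) (lcons (oth a) (WW m k))"
    by (simp add: Wg_cons[of a m, symmetric] Gg_Suc[symmetric])
  finally show ?thesis .
qed

lemma WW_rec: "WW m k = lcons a (GW m k) + smul (q powi 2) (lcons a (WG m k))"
proof -
  have "WW m k = qshuffle q (a # Gg a m) (a # Gg a k)"
    by (simp only: Wg_cons)
  also have "\<dots> = lcons a (qshuffle q (Gg a m) (a # Gg a k))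
     + smul (q powi (sum_list (map (\<lambda>c. pairing c a) (a # Gg a m)))) (lcons a (qshuffle q (a # Gg a m) (Gg a k)))"
    by (rule qs_cons)
  also have "\<dots> = lcons a (GW m k) + smul (q powi 2) (lcons a (WG m k))"
    by (simp add: Wg_cons[symmetric])
  finally show ?thesis .
qed

lemma GG_SS: "GG (Suc m) (Suc k) = lcons (oth a) (WG m (Suc k)) + lcons (oth a) (GW (Suc m) k)"
proof -
  have "GG (Suc m) (Suc k) = qshuffle q (oth a # Wg a m) (oth a # Wg a k)"
    by (simp only: Gg_Suc)
  also have "\<dots> = lcons (oth a) (qshuffle q (Wg a m) (oth a # Wg a k))
     + smul (q powi (sum_list (map (\<lambda>c. pairing c (oth a)) (oth a # Wg a m)))) (lcons (oth a) (qshuffle q (oth a # Wg a m) (Wg a k)))"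
    by (rule qs_cons)
  also have "\<dots> = lcons (oth a) (WG m (Suc k)) + lcons (oth a) (GW (Suc m) k)"
    by (simp add: Gg_Suc[symmetric])
  finally show ?thesis .
qed


lemma WW0:
  assumes q: "q \<noteq> 0"
  shows "WW 0 k = WW k 0"
proof (induction k)
  case 0
  then show ?case by simp
next
  case (Suc k')
  have pw: "q powi 2 * q powi (-2) = 1" using q by (simp add: power_int_minus)
  show ?case
    apply (simp only: WW_rec[of 0 "Suc k'"] WW_rec[of "Suc k'" 0] GW_0 GW_Suc WG_0 WG_Suc GG_0l GG_0r
        vsimps Suc.IH pw smul_one)
    apply (simp only: add_ac)
    done
qed

lemma comm_aux:
  assumes q: "q \<noteq> 0"
  shows "m + k = N \<Longrightarrow> GG m k = GG k m \<and> WW m k = WW k m"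
proof (induction N arbitrary: m k rule: less_induct)
  case (less N)
  have pw: "q powi 2 * q powi (-2) = 1" using q by (simp add: power_int_minus)
  have G: "GG m k = GG k m" if mk: "m + k = N" for m k
  proof (cases m)
    case 0
    then show ?thesis by simp
  next
    case (Suc m')
    show ?thesis
    proof (cases k)
      case 0
      then show ?thesis by simp
    next
      case (Suc k')
      have i1: "GG m' (Suc k') = GG (Suc k') m'" using less.IH[of "m' + Suc k'" m' "Suc k'"] mk \<open>m = Suc m'\<close> Suc by simp
      have i2: "GG (Suc m') k' = GG k' (Suc m')" using less.IH[of "Suc m' + k'" "Suc m'" k'] mk \<open>m = Suc m'\<close> Suc by simp
      have i3: "WW m' k' = WW k' m'" using less.IH[of "m' + k'" m' k'] mk \<open>m = Suc m'\<close> Suc by simp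
      show ?thesis
        apply (simp only: \<open>m = Suc m'\<close> Suc GG_SS WG_Suc GW_Suc vsimps i1 i2 i3)
        apply (simp only: add_ac)
        done
    qed
  qed
  have W: "WW m k = WW k m"
  proof (cases m)
    case 0
    then show ?thesis using WW0[OF q] by simp
  next
    case (Suc m')
    show ?thesis
    proof (cases k)
      case 0
      then show ?thesis using WW0[OF q] by simp
    next
      case (Suc k')
      have i1: "GG (Suc m') (Suc k') = GG (Suc k') (Suc m')" using G less.prems \<open>m = Suc m'\<close> Suc by simp
      have i2: "WW m' (Suc k') = WW (Suc k') m'" using less.IH[of "m' + Suc k'" m' "Suc k'"] less.prems \<open>m = Suc m'\<close> Suc by simp
      have i3: "WW (Suc m') k' = WW k' (Suc m')" using less.IH[of "Suc m' + k'" "Suc m'" k'] less.prems \<open>m = Suc m'\<close> Suc by simp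
      show ?thesis
        apply (simp only: \<open>m = Suc m'\<close> Suc WW_rec[of "Suc m'" "Suc k'"] WW_rec[of "Suc k'" "Suc m'"]
           WG_Suc GW_Suc vsimps i1 i2 i3 pw smul_one)
        apply (simp only: add_ac)
        done
    qed
  qed
  show ?case using G[OF less.prems] W by simp
qed

lemma GG_comm: "q \<noteq> 0 \<Longrightarrow> GG m k = GG k m"
  using comm_aux by blast
lemma WW_comm: "q \<noteq> 0 \<Longrightarrow> WW m k = WW k m"
  using comm_aux by blast


lemma generic:
  assumes q: "q \<noteq> 0"
  shows "lin_span {qshuffle q (Gg a i) (Wg a j) | i j. i + j = n}
       = lin_span {qshuffle q (Wg a j) (Gg a i) | i j. i + j = n}"
proof -
  define A where "A i = GW i (n - i)" for i
  define B where "B i = WG (n - i) i" for i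
  define X where "X i = lcons a (GG i (n - i))" for i
  define Y where "Y i = (if i = 0 then 0 else lcons (oth a) (WW (i - 1) (n - i)))" for i
  define c where "c = q powi (-2)"
  define SA where "SA = {qshuffle q (Gg a i) (Wg a j) | i j. i + j = n}"
  define SB where "SB = {qshuffle q (Wg a j) (Gg a i) | i j. i + j = n}"
  have pw: "q powi 2 * c = 1" using q by (simp add: c_def power_int_minus)
  have hA: "A i = X i + Y i" for i
  proof (cases i)
    case 0
    then show ?thesis by (simp add: A_def X_def Y_def GW_0 Wg_cons)
  next
    case (Suc i')
    then show ?thesis by (simp add: A_def X_def Y_def GW_Suc add.commute)
  qed
  have hB: "B i = X i + smul c (Y i)" for i
  proof (cases i)
    case 0
    then show ?thesis by (simp add: B_def X_def Y_def WG_0 GG_comm[OF q, of n 0] Wg_cons)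
  next
    case (Suc i')
    then show ?thesis
      by (simp add: B_def X_def Y_def WG_Suc c_def GG_comm[OF q, of "n - Suc i'" "Suc i'"]
          WW_comm[OF q, of "n - Suc i'" i'])
  qed
  have hX: "X (n - i) = X i" if "i \<le> n" for i
    using that by (simp add: X_def GG_comm[OF q, of "n - i" i])
  have hY: "Y (n - i) = Y (Suc i)" if "i < n" for i
  proof -
    have "n - i \<noteq> 0" "n - i - 1 = n - Suc i" "n - (n - i) = i" using that by auto
    then show ?thesis by (simp add: Y_def WW_comm[OF q, of "n - Suc i" i])
  qed
  have memA: "A i \<in> SA" if "i \<le> n" for i
    unfolding A_def SA_def using that by (intro CollectI exI[of _ i] exI[of _ "n - i"]) simp
  have memB: "B i \<in> SB" if "i \<le> n" for i
    unfolding B_def SB_def using that by (intro CollectI exI[of _ i] exI[of _ "n - i"]) simp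
  have YA: "Y i \<in> spn SA \<and> Y i \<in> spn SB" if "i \<le> n" for i
    using that
  proof (induction i)
    case 0
    then show ?case by (simp add: Y_def spn_0 zero_fun_def[symmetric])
  next
    case (Suc i)
    then have i: "i < n" by simp
    have dA: "A (n - i) - A i = Y (Suc i) - Y i"
      using hA[of "n - i"] hA[of i] hX[of i] hY[OF i] i by (simp add: algebra_simps)
    have dB: "smul (q powi 2) (B (n - i) - B i) = Y (Suc i) - Y i"
    proof -
      have "B (n - i) - B i = smul c (Y (Suc i) - Y i)"
        using hB[of "n - i"] hB[of i] hX[of i] hY[OF i] i by (simp add: algebra_simps smul_diff)
      then show ?thesis using pw by simp
    qed
    have e1: "Y (Suc i) = Y i + (A (n - i) - A i)" using dA by (simp add: algebra_simps)
    have e2: "Y (Suc i) = Y i + smul (q powi 2) (B (n - i) - B i)" using dB by (simp add: algebra_simps)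
    have IH: "Y i \<in> spn SA" "Y i \<in> spn SB" using Suc i by auto
    have a1: "A (n - i) \<in> SA" "A i \<in> SA" "B (n - i) \<in> SB" "B i \<in> SB"
      using memA memB i by auto
    have "Y (Suc i) \<in> spn SA"
      unfolding e1 by (rule spn_add[OF IH(1) spn_diff[OF spn_base[OF a1(1)] spn_base[OF a1(2)]]])
    moreover have "Y (Suc i) \<in> spn SB"
      unfolding e2 by (rule spn_add[OF IH(2) spn_smul[OF spn_diff[OF spn_base[OF a1(3)] spn_base[OF a1(4)]]]])
    ultimately show ?case by (rule conjI)
  qed
  have XA: "X i \<in> spn SA" if "i \<le> n" for i
  proof -
    have "X i = A i - Y i" using hA[of i] by simp
    then show ?thesis using YA[OF that] memA[OF that] by (simp add: spn_diff spn_base)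
  qed
  have XB: "X i \<in> spn SB" if "i \<le> n" for i
  proof -
    have "X i = B i - smul c (Y i)" using hB[of i] by simp
    then show ?thesis using YA[OF that] memB[OF that] by (simp add: spn_diff spn_base spn_smul)
  qed
  have "SB \<subseteq> spn SA"
  proof
    fix f assume "f \<in> SB"
    then obtain i j where ij: "i + j = n" "f = qshuffle q (Wg a j) (Gg a i)" unfolding SB_def by blast
    then have "f = B i" "i \<le> n" by (auto simp: B_def)
    then show "f \<in> spn SA" using hB[of i] XA YA by (simp add: spn_add spn_smul)
  qed
  moreover have "SA \<subseteq> spn SB"
  proof
    fix f assume "f \<in> SA"
    then obtain i j where ij: "i + j = n" "f = qshuffle q (Gg a i) (Wg a j)" unfolding SA_def by blast
    then have "f = A i" "i \<le> n" by (auto simp: A_def)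
    then show "f \<in> spn SB" using hA[of i] XB YA by (simp add: spn_add)
  qed
  ultimately have "spn SA = spn SB" by (intro spn_eqI)
  then show ?thesis unfolding lin_span_spn SA_def SB_def .
qed
end


lemma rep_comm: "concat (replicate k xs) @ xs = xs @ concat (replicate k xs)"
  by (induction k) auto
lemma rev_rep: "rev (concat (replicate k [x, y])) = concat (replicate k [y, x])"
  by (induction k) (auto simp: rep_comm)
lemma rep_shift: "x # concat (replicate k [y, x]) = concat (replicate k [x, y]) @ [x]"
  by (induction k) auto
lemma oth_oth[simp]: "oth (oth a) = a" by (cases a) auto

lemma rev_Wg: "rev (Wg a k) = Wg a k"
  by (simp add: Wg_def rev_rep rep_shift)
lemma rev_Gg: "rev (Gg a k) = Gg (oth a) k"
  by (simp add: Gg_def rev_rep)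

lemma qs_comp_rev: "q \<noteq> 0 \<Longrightarrow> qshuffle q u v = qshuffle q (rev v) (rev u) \<circ> rev"
  using qs_rev[of q u v "rev _"] by (auto simp: fun_eq_iff)

lemma Gw_eq: "Gw = Gg X" by (rule ext) (simp add: Gw_def Gg_def)
lemma Gtw_eq: "Gtw = Gg Y" by (rule ext) (simp add: Gtw_def Gg_def)
lemma Wneg_eq: "Wneg = Wg X" by (rule ext) (simp add: Wneg_def Wg_def)
lemma Wpos_eq: "Wpos = Wg Y" by (rule ext) (simp add: Wpos_def Wg_def)

lemma img_rev_set:
  "{F i j \<circ> rev | i j. i + j = (n::nat)} = (\<lambda>f. f \<circ> rev) ` {F i j | i j. i + j = n}"
  by blast

lemma span_rev:
  assumes "lin_span S = lin_span T"
  shows "lin_span ((\<lambda>f. f \<circ> rev) ` S) = lin_span ((\<lambda>f. f \<circ> rev) ` T)"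
  using assms by (simp add: lin_span_spn spn_comp)

theorem proposition6p2:
  fixes q :: "'a::field" and n :: nat
  assumes "q \<noteq> 0"
    and "\<And>m::nat. m > 0 \<Longrightarrow> q ^ m \<noteq> 1"
  shows "lin_span {qshuffle q (Gw i) (Wneg j) | i j. i + j = n}
           = lin_span {qshuffle q (Wneg j) (Gw i) | i j. i + j = n}
       \<and> lin_span {qshuffle q (Gw i) (Wpos j) | i j. i + j = n}
           = lin_span {qshuffle q (Wpos j) (Gw i) | i j. i + j = n}
       \<and> lin_span {qshuffle q (Gtw i) (Wneg j) | i j. i + j = n}
           = lin_span {qshuffle q (Wneg j) (Gtw i) | i j. i + j = n}
       \<and> lin_span {qshuffle q (Gtw i) (Wpos j) | i j. i + j = n}
           = lin_span {qshuffle q (Wpos j) (Gtw i) | i j. i + j = n}"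
proof -
  note q = assms(1)
  have P1: "lin_span {qshuffle q (Gg X i) (Wg X j) | i j. i + j = n}
           = lin_span {qshuffle q (Wg X j) (Gg X i) | i j. i + j = n}"
    by (rule generic[OF q])
  have P4: "lin_span {qshuffle q (Gg Y i) (Wg Y j) | i j. i + j = n}
           = lin_span {qshuffle q (Wg Y j) (Gg Y i) | i j. i + j = n}"
    by (rule generic[OF q])
  have r1: "qshuffle q (Gg Y i) (Wg X j) = qshuffle q (Wg X j) (Gg X i) \<circ> rev" for i j
    using qs_comp_rev[OF q, of "Gg Y i" "Wg X j"] by (simp add: rev_Wg rev_Gg)
  have r2: "qshuffle q (Wg X j) (Gg Y i) = qshuffle q (Gg X i) (Wg X j) \<circ> rev" for i j
    using qs_comp_rev[OF q, of "Wg X j" "Gg Y i"] by (simp add: rev_Wg rev_Gg)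
  have r3: "qshuffle q (Gg X i) (Wg Y j) = qshuffle q (Wg Y j) (Gg Y i) \<circ> rev" for i j
    using qs_comp_rev[OF q, of "Gg X i" "Wg Y j"] by (simp add: rev_Wg rev_Gg)
  have r4: "qshuffle q (Wg Y j) (Gg X i) = qshuffle q (Gg Y i) (Wg Y j) \<circ> rev" for i j
    using qs_comp_rev[OF q, of "Wg Y j" "Gg X i"] by (simp add: rev_Wg rev_Gg)
  have P3: "lin_span {qshuffle q (Gg Y i) (Wg X j) | i j. i + j = n}
           = lin_span {qshuffle q (Wg X j) (Gg Y i) | i j. i + j = n}"
    unfolding r1 r2 img_rev_set[of "\<lambda>i j. qshuffle q (Wg X j) (Gg X i)"]
      img_rev_set[of "\<lambda>i j. qshuffle q (Gg X i) (Wg X j)"]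
    using span_rev[OF P1[symmetric]] by simp
  have P2: "lin_span {qshuffle q (Gg X i) (Wg Y j) | i j. i + j = n}
           = lin_span {qshuffle q (Wg Y j) (Gg X i) | i j. i + j = n}"
    unfolding r3 r4 img_rev_set[of "\<lambda>i j. qshuffle q (Wg Y j) (Gg Y i)"]
      img_rev_set[of "\<lambda>i j. qshuffle q (Gg Y i) (Wg Y j)"]
    using span_rev[OF P4[symmetric]] by simp
  show ?thesis unfolding Gw_eq Gtw_eq Wneg_eq Wpos_eq using P1 P2 P3 P4 by blast
qed

end
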